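(* Let $e\geq 2$, $N=\langle\sigma\rangle$ cyclic of order $2^e$, and let $G$ be a transitive subgroup of $\mathrm{Hol}(N)$ of order $2^{e+1}$ that contains $\varphi_{1+2^{e-1}}$. Then $|C_G(\varphi_{1+2^{e-1}})|=2^e$. Moreover, for any $[\sigma^u,\varphi_{-1}]\in G$ with $u$ odd, we have $|C_G([\sigma^u,\varphi_{-1}])|\leq 2^e$, and this inequality is strict if and only if there exists $[\sigma^v,\varphi_b]\in G$ with $u(b-1)\not\equiv -2v\pmod{2^{e-1}}$.
   Context: For an odd integer $a$, $\varphi_a\in\mathrm{Aut}(N)$ is $\sigma\mapsto\sigma^a$. Elements of $\mathrm{Hol}(N)=N\rtimes\mathrm{Aut}(N)$ are written $[\sigma^u,\varphi_a]$ with $[\sigma^u,\varphi_a][\sigma^v,\varphi_b]=[\sigma^{u+va},\varphi_{ab}]$, and $\varphi_a$ denotes $[1,\varphi_a]$. $\mathrm{Hol}(N)$ acts on $N$ by $[\sigma^u,\varphi_a]\cdot\sigma^v=\sigma^{u+av}$; a subgroup is transitive if it acts transitively on $N$. $C_G(x)$ is the centraliser of $x$ in $G$. *)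

theory Defs
  imports "HOL-Algebra.Group" "HOL-Number_Theory.Cong"
begin

text \<open>N = <sigma> cyclic of order 2^e; sigma^u is encoded by u in {0..<2^e}.
  Aut(N) = {phi_a | a odd}, phi_a encoded by its residue a in {0..<2^e}.
  An element [sigma^u, phi_a] of Hol(N) is the pair (u, a).\<close>

definition hol :: "nat \<Rightarrow> (int \<times> int) monoid" where
  "hol e = \<lparr> carrier = {g. 0 \<le> fst g \<and> fst g < 2^e \<and> 0 \<le> snd g \<and> snd g < 2^e \<and> odd (snd g)},
             monoid.mult = (\<lambda>g h. ((fst g + fst h * snd g) mod 2^e, (snd g * snd h) mod 2^e)),
             monoid.one = (0, 1) \<rparr>"

definition hol_act :: "nat \<Rightarrow> int \<times> int \<Rightarrow> int \<Rightarrow> int" where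
  "hol_act e g v = (fst g + snd g * v) mod 2^e"

definition transitive_hol :: "nat \<Rightarrow> (int \<times> int) set \<Rightarrow> bool" where
  "transitive_hol e G \<longleftrightarrow>
     (\<forall>x \<in> {0..<2^e}. \<forall>y \<in> {0..<2^e}. \<exists>g \<in> G. hol_act e g x = y)"

definition phi :: "nat \<Rightarrow> int \<Rightarrow> int \<times> int" where
  "phi e a = (0, a mod 2^e)"

definition hol_elt :: "nat \<Rightarrow> int \<Rightarrow> int \<Rightarrow> int \<times> int" where
  "hol_elt e u a = (u mod 2^e, a mod 2^e)"

definition centraliser :: "('a, 'b) monoid_scheme \<Rightarrow> 'a set \<Rightarrow> 'a \<Rightarrow> 'a set" where
  "centraliser M H x = {g \<in> H. g \<otimes>\<^bsub>M\<^esub> x = x \<otimes>\<^bsub>M\<^esub> g}"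

end

theory Submission
  imports Defs
begin

lemma odd_mod_pow: "e \<ge> 1 \<Longrightarrow> odd ((x::int) mod 2^e) \<longleftrightarrow> odd x"
  by (metis dvd_power_le dvd_refl even_mod_2_iff mod_mod_cancel power_one_right)

lemma hol_group: assumes "e \<ge> 1" shows "group (hol e)"
proof (rule groupI)
  show "\<one>\<^bsub>hol e\<^esub> \<in> carrier (hol e)" using assms by (simp add: hol_def)
  fix x y assume "x \<in> carrier (hol e)" "y \<in> carrier (hol e)"
  then show "x \<otimes>\<^bsub>hol e\<^esub> y \<in> carrier (hol e)" using assms
    by (auto simp: hol_def odd_mod_pow)
next
  fix x y z assume "x \<in> carrier (hol e)" "y \<in> carrier (hol e)" "z \<in> carrier (hol e)"
  then show "x \<otimes>\<^bsub>hol e\<^esub> y \<otimes>\<^bsub>hol e\<^esub> z = x \<otimes>\<^bsub>hol e\<^esub> (y \<otimes>\<^bsub>hol e\<^esub> z)"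
  proof -
    have 1: "(a + c * (b mod m)) mod m = (a + c*b) mod m" for a b c m :: int
      by (metis mod_add_right_eq mod_mult_right_eq)
    have "(fst x + (fst y + fst z * snd y) mod 2^e * snd x) mod 2^e
        = (fst x + fst y * snd x + fst z * (snd x * snd y)) mod 2^e"
      using 1[of "fst x" "snd x" "fst y + fst z * snd y" "2^e"] by (simp add: algebra_simps)
    moreover have "((fst x + fst y * snd x) mod 2^e + fst z * (snd x * snd y mod 2^e)) mod 2^e
        = (fst x + fst y * snd x + fst z * (snd x * snd y)) mod 2^e"
      using 1[of "(fst x + fst y * snd x) mod 2^e" "fst z" "snd x * snd y" "2^e"]
      by (simp add: mod_simps)
    moreover have "snd x * snd y mod 2 ^ e * snd z mod 2 ^ e = snd x * (snd y * snd z mod 2 ^ e) mod 2 ^ e"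
      by (metis mod_mult_left_eq mod_mult_right_eq mult.assoc)
    ultimately show ?thesis by (simp add: hol_def mult.assoc)
  qed
next
  fix x assume x: "x \<in> carrier (hol e)"
  then show "\<one>\<^bsub>hol e\<^esub> \<otimes>\<^bsub>hol e\<^esub> x = x" by (simp add: hol_def)
next
  fix x assume x: "x \<in> carrier (hol e)"
  then have "coprime (snd x) (2^e)" by (simp add: hol_def)
  then obtain b where b: "[snd x * b = 1] (mod 2^e)" using cong_solve_coprime_int by blast
  define b' where "b' = b mod 2^e"
  have "odd b" using b assms
    by (metis cong_def dvd_mult even_mod_2_iff odd_mod_pow odd_one)
  then have c: "(- fst x * b' mod 2 ^ e, b') \<in> carrier (hol e)"
    using assms by (simp add: hol_def b'_def odd_mod_pow)
  have "(- fst x * b' mod 2 ^ e, b') \<otimes>\<^bsub>hol e\<^esub> x = \<one>\<^bsub>hol e\<^esub>"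
    using b assms unfolding hol_def b'_def cong_def
    by (simp add: mod_simps algebra_simps)
  with c show "\<exists>y\<in>carrier (hol e). y \<otimes>\<^bsub>hol e\<^esub> x = \<one>\<^bsub>hol e\<^esub>" by blast
qed


lemma coset_disj:
  assumes grp: "group M" and H: "subgroup H M" and G: "subgroup G M" and HG: "H \<subseteq> G"
    and g0: "g0 \<in> G" "g0 \<notin> H"
  shows "card ((\<lambda>h. g0 \<otimes>\<^bsub>M\<^esub> h) ` H) = card H"
    and "(\<lambda>h. g0 \<otimes>\<^bsub>M\<^esub> h) ` H \<subseteq> G"
    and "(\<lambda>h. g0 \<otimes>\<^bsub>M\<^esub> h) ` H \<inter> H = {}"
proof -
  interpret group M by (rule grp)
  have Hc: "H \<subseteq> carrier M" using subgroup.subset[OF H] .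
  have Gc: "G \<subseteq> carrier M" using subgroup.subset[OF G] .
  have g0c: "g0 \<in> carrier M" using g0(1) Gc by (rule subsetD[rotated])
  show "card ((\<lambda>h. g0 \<otimes>\<^bsub>M\<^esub> h) ` H) = card H"
  proof (rule card_image, rule inj_onI)
    fix x y assume xy: "x \<in> H" "y \<in> H" "g0 \<otimes>\<^bsub>M\<^esub> x = g0 \<otimes>\<^bsub>M\<^esub> y"
    have xc: "x \<in> carrier M" "y \<in> carrier M" using xy(1,2) Hc by auto
    have "g0 \<in> Units M" using g0c Units_eq by simp
    then show "x = y" using Units_l_cancel[OF _ xc] xy(3) by blast
  qed
  show "(\<lambda>h. g0 \<otimes>\<^bsub>M\<^esub> h) ` H \<subseteq> G"
  proof
    fix y assume "y \<in> (\<lambda>h. g0 \<otimes>\<^bsub>M\<^esub> h) ` H"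
    then obtain h where "h \<in> H" "y = g0 \<otimes>\<^bsub>M\<^esub> h" by blast
    then show "y \<in> G" using subgroup.m_closed[OF G g0(1)] HG by blast
  qed
  show "(\<lambda>h. g0 \<otimes>\<^bsub>M\<^esub> h) ` H \<inter> H = {}"
  proof (rule ccontr)
    assume "(\<lambda>h. g0 \<otimes>\<^bsub>M\<^esub> h) ` H \<inter> H \<noteq> {}"
    then obtain h h' where hh: "h \<in> H" "h' \<in> H" "g0 \<otimes>\<^bsub>M\<^esub> h = h'" by blast
    have hc: "h \<in> carrier M" "h' \<in> carrier M" using hh(1,2) Hc by auto
    have "g0 = h' \<otimes>\<^bsub>M\<^esub> inv\<^bsub>M\<^esub> h"
      using inv_solve_right[OF g0c hc(2) hc(1)] hh(3) by simp
    moreover have "h' \<otimes>\<^bsub>M\<^esub> inv\<^bsub>M\<^esub> h \<in> H"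
      using subgroup.m_closed[OF H hh(2) subgroup.m_inv_closed[OF H hh(1)]] .
    ultimately show False using g0(2) by simp
  qed
qed

lemma bound2:
  assumes grp: "group M" and H: "subgroup H M" and G: "subgroup G M" and HG: "H \<subseteq> G"
    and fin: "finite G" and g0: "g0 \<in> G" "g0 \<notin> H"
  shows "2 * card H \<le> card G"
proof -
  let ?T = "(\<lambda>h. g0 \<otimes>\<^bsub>M\<^esub> h) ` H"
  note c = coset_disj[OF assms(1-4) g0]
  have fH: "finite H" using finite_subset[OF HG fin] .
  have "card (H \<union> ?T) = card H + card ?T"
    by (rule card_Un_disjoint) (use c fH in auto)
  moreover have "card (H \<union> ?T) \<le> card G"
    by (rule card_mono[OF fin]) (use c HG in blast)
  ultimately show ?thesis using c(1) by simp
qed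

lemma count2:
  assumes grp: "group M" and H: "subgroup H M" and G: "subgroup G M" and HG: "H \<subseteq> G"
    and fin: "finite G" and g0: "g0 \<in> G" "g0 \<notin> H"
    and all: "\<And>g. g \<in> G \<Longrightarrow> g \<notin> H \<Longrightarrow> inv\<^bsub>M\<^esub> g0 \<otimes>\<^bsub>M\<^esub> g \<in> H"
  shows "card G = 2 * card H"
proof -
  interpret group M by (rule grp)
  let ?T = "(\<lambda>h. g0 \<otimes>\<^bsub>M\<^esub> h) ` H"
  note c = coset_disj[OF assms(1-4) g0]
  have fH: "finite H" using finite_subset[OF HG fin] .
  have "card (H \<union> ?T) = card H + card ?T"
    by (rule card_Un_disjoint) (use c fH in auto)
  moreover have "G = H \<union> ?T"
  proof
    show "H \<union> ?T \<subseteq> G" using c(2) HG by blast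
    show "G \<subseteq> H \<union> ?T"
    proof
      fix g assume g: "g \<in> G"
      show "g \<in> H \<union> ?T"
      proof (cases "g \<in> H")
        case False
        have gc: "g \<in> carrier M" "g0 \<in> carrier M"
          using g g0(1) subgroup.subset[OF G] by auto
        have "g = g0 \<otimes>\<^bsub>M\<^esub> (inv\<^bsub>M\<^esub> g0 \<otimes>\<^bsub>M\<^esub> g)"
          using gc by (simp add: m_assoc[symmetric])
        then show ?thesis using all[OF g False] by blast
      qed simp
    qed
  qed
  ultimately show ?thesis using c(1) by simp
qed

lemma cancel_F:
  fixes F :: "int \<times> int \<Rightarrow> int"
  assumes e: "e \<ge> 1" and k: "k \<le> e"
    and hom: "\<And>p q. [F (p \<otimes>\<^bsub>hol e\<^esub> q) = snd p * F q + F p] (mod 2^e)"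
    and g: "g \<in> carrier (hol e)" and x: "x \<in> carrier (hol e)"
    and eq: "[F (g \<otimes>\<^bsub>hol e\<^esub> x) = F g] (mod 2^k)"
  shows "[F x = 0] (mod 2^k)"
proof -
  have h: "[F (g \<otimes>\<^bsub>hol e\<^esub> x) = snd g * F x + F g] (mod 2^k)"
    using cong_dvd_modulus[OF hom[of g x] le_imp_power_dvd[OF k]] .
  have "[snd g * F x + F g = F g] (mod 2^k)" using cong_trans[OF cong_sym[OF h] eq] .
  then have "[snd g * F x = 0] (mod 2^k)" by (simp only: cong_add_rcancel_0)
  then have "[snd g * F x = snd g * 0] (mod 2^k)" by simp
  moreover have "coprime (snd g) (2^k)" using g by (simp add: hol_def)
  ultimately show ?thesis using cong_mult_lcancel by blast
qed

lemma kernel_sub: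
  fixes F :: "int \<times> int \<Rightarrow> int"
  assumes e: "e \<ge> 1" and k: "k \<le> e" and G: "subgroup G (hol e)"
    and hom: "\<And>p q. [F (p \<otimes>\<^bsub>hol e\<^esub> q) = snd p * F q + F p] (mod 2^e)"
  shows "subgroup {g\<in>G. [F g = 0] (mod 2^k)} (hol e)"
    and "\<And>g g'. g \<in> G \<Longrightarrow> g' \<in> G \<Longrightarrow> [F g = F g'] (mod 2^k) \<Longrightarrow>
            inv\<^bsub>hol e\<^esub> g \<otimes>\<^bsub>hol e\<^esub> g' \<in> {g\<in>G. [F g = 0] (mod 2^k)}"
proof -
  interpret group "hol e" by (rule hol_group[OF e])
  have Gc: "G \<subseteq> carrier (hol e)" using subgroup.subset[OF G] .
  have cF: "[F x = 0] (mod 2^k)" if "g \<in> carrier (hol e)" "x \<in> carrier (hol e)"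
      "[F (g \<otimes>\<^bsub>hol e\<^esub> x) = F g] (mod 2^k)" for g x
    using cancel_F[OF e k hom that] .
  have F1: "[F \<one>\<^bsub>hol e\<^esub> = 0] (mod 2^k)"
    using cF[of "\<one>\<^bsub>hol e\<^esub>" "\<one>\<^bsub>hol e\<^esub>"] by simp
  show "subgroup {g\<in>G. [F g = 0] (mod 2^k)} (hol e)"
  proof
    show "{g \<in> G. [F g = 0] (mod 2 ^ k)} \<subseteq> carrier (hol e)" using Gc by auto
  next
    fix x y assume x: "x \<in> {g \<in> G. [F g = 0] (mod 2 ^ k)}" and y: "y \<in> {g \<in> G. [F g = 0] (mod 2 ^ k)}"
    have xy: "x \<in> G" "y \<in> G" "[F x = 0] (mod 2^k)" "[F y = 0] (mod 2^k)" using x y by auto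
    have h: "[F (x \<otimes>\<^bsub>hol e\<^esub> y) = snd x * F y + F x] (mod 2^k)"
      using cong_dvd_modulus[OF hom[of x y] le_imp_power_dvd[OF k]] .
    have "[snd x * F y + F x = snd x * 0 + 0] (mod 2^k)"
      using xy by (intro cong_add cong_mult cong_refl) auto
    then have "[F (x \<otimes>\<^bsub>hol e\<^esub> y) = 0] (mod 2^k)" using cong_trans[OF h] by simp
    moreover have "x \<otimes>\<^bsub>hol e\<^esub> y \<in> G" using subgroup.m_closed[OF G xy(1,2)] .
    ultimately show "x \<otimes>\<^bsub>hol e\<^esub> y \<in> {g \<in> G. [F g = 0] (mod 2 ^ k)}" by simp
  next
    show "\<one>\<^bsub>hol e\<^esub> \<in> {g \<in> G. [F g = 0] (mod 2 ^ k)}"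
      using F1 subgroup.one_closed[OF G] by simp
  next
    fix x assume x: "x \<in> {g \<in> G. [F g = 0] (mod 2 ^ k)}"
    have xG: "x \<in> G" and Fx: "[F x = 0] (mod 2^k)" using x by auto
    have xc: "x \<in> carrier (hol e)" using xG Gc by auto
    have "[F \<one>\<^bsub>hol e\<^esub> = F x] (mod 2^k)" using cong_trans[OF F1 cong_sym[OF Fx]] .
    then have "[F (x \<otimes>\<^bsub>hol e\<^esub> inv\<^bsub>hol e\<^esub> x) = F x] (mod 2^k)"
      using r_inv[OF xc] by simp
    then have "[F (inv\<^bsub>hol e\<^esub> x) = 0] (mod 2^k)" using cF[OF xc inv_closed[OF xc]] by blast
    moreover have "inv\<^bsub>hol e\<^esub> x \<in> G" using subgroup.m_inv_closed[OF G xG] .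
    ultimately show "inv\<^bsub>hol e\<^esub> x \<in> {g \<in> G. [F g = 0] (mod 2 ^ k)}" by simp
  qed
  fix g g' assume g: "g \<in> G" and g': "g' \<in> G" and eq: "[F g = F g'] (mod 2^k)"
  have gc: "g \<in> carrier (hol e)" "g' \<in> carrier (hol e)" using g g' Gc by auto
  have id: "g \<otimes>\<^bsub>hol e\<^esub> (inv\<^bsub>hol e\<^esub> g \<otimes>\<^bsub>hol e\<^esub> g') = g'"
    using gc by (simp add: m_assoc[symmetric])
  have "[F (g \<otimes>\<^bsub>hol e\<^esub> (inv\<^bsub>hol e\<^esub> g \<otimes>\<^bsub>hol e\<^esub> g')) = F g] (mod 2^k)"
    unfolding id using cong_sym[OF eq] .
  then have "[F (inv\<^bsub>hol e\<^esub> g \<otimes>\<^bsub>hol e\<^esub> g') = 0] (mod 2^k)"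
    using cF[OF gc(1) m_closed[OF inv_closed[OF gc(1)] gc(2)]] by blast
  moreover have "inv\<^bsub>hol e\<^esub> g \<otimes>\<^bsub>hol e\<^esub> g' \<in> G"
    using subgroup.m_closed[OF G subgroup.m_inv_closed[OF G g] g'] .
  ultimately show "inv\<^bsub>hol e\<^esub> g \<otimes>\<^bsub>hol e\<^esub> g' \<in> {g\<in>G. [F g = 0] (mod 2^k)}" by simp
qed

lemma pow_split: "e \<ge> 1 \<Longrightarrow> (2::int)^e = 2 * 2^(e-1)"
  by (cases e) auto

lemma key1:
  fixes f :: int
  assumes e: "e \<ge> 1" and f: "0 \<le> f" "f < 2^e"
  shows "(f = (f * (1 + 2^(e-1))) mod 2^e) \<longleftrightarrow> even f"
proof -
  have "(f = (f * (1 + 2^(e-1))) mod 2^e) \<longleftrightarrow> [f = f * (1 + 2^(e-1))] (mod 2^e)"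
    using f by (simp add: cong_def)
  also have "\<dots> \<longleftrightarrow> 2^e dvd (f - f * (1 + 2^(e-1)))" by (rule cong_iff_dvd_diff)
  also have "\<dots> \<longleftrightarrow> 2 * 2^(e-1) dvd f * 2^(e-1)"
    using pow_split[OF e] by (simp add: algebra_simps dvd_minus_iff)
  also have "\<dots> \<longleftrightarrow> even f" by simp
  finally show ?thesis .
qed

lemma modF:
  fixes u a b M :: int
  shows "[u * (a mod M - 1) + 2 * (b mod M) = u * (a - 1) + 2 * b] (mod M)"
proof -
  have "[a mod M = a] (mod M)" "[b mod M = b] (mod M)" by simp_all
  then show ?thesis by (intro cong_add cong_mult cong_diff cong_refl) auto
qed

lemma key2:
  fixes u :: int
  assumes e: "e \<ge> 1" and g: "g \<in> carrier (hol e)"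
  shows "(g \<otimes>\<^bsub>hol e\<^esub> hol_elt e u (-1) = hol_elt e u (-1) \<otimes>\<^bsub>hol e\<^esub> g) \<longleftrightarrow>
         [u * (snd g - 1) + 2 * fst g = 0] (mod 2^e)"
proof -
  define M :: int where "M = 2^e"
  define v where "v = fst g"
  define b where "b = snd g"
  define u' where "u' = u mod M"
  define m where "m = (-1) mod M"
  have x: "hol_elt e u (-1) = (u', m)" by (simp add: hol_elt_def u'_def m_def M_def)
  have "(g \<otimes>\<^bsub>hol e\<^esub> hol_elt e u (-1) = hol_elt e u (-1) \<otimes>\<^bsub>hol e\<^esub> g) \<longleftrightarrow>
        (v + u' * b) mod M = (u' + v * m) mod M"
    by (simp add: x hol_def v_def b_def M_def mult.commute)
  also have "\<dots> \<longleftrightarrow> M dvd ((v + u' * b) - (u' + v * m))"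
    by (simp add: cong_iff_dvd_diff[symmetric] cong_def)
  also have "(v + u' * b) - (u' + v * m) = (u * (b - 1) + 2 * v) + ((u' - u) * (b - 1) - v * (m + 1))"
    by (simp add: algebra_simps)
  also have "M dvd ((u' - u) * (b - 1) - v * (m + 1))"
  proof -
    have "M dvd (u' - u)" unfolding u'_def by (simp add: cong_iff_dvd_diff[symmetric])
    moreover have "M dvd (m + 1)" unfolding m_def
      using cong_iff_dvd_diff[of "(-1) mod M" "-1" M] by simp
    ultimately show ?thesis by simp
  qed
  then have "M dvd ((u * (b - 1) + 2 * v) + ((u' - u) * (b - 1) - v * (m + 1))) \<longleftrightarrow> M dvd (u * (b - 1) + 2 * v)"
    by (rule dvd_add_left_iff)
  finally show ?thesis by (simp add: cong_0_iff M_def v_def b_def)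
qed


theorem lemma5p9:
  fixes e :: nat and G :: "(int \<times> int) set"
  assumes e2: "e \<ge> 2"
    and sub: "subgroup G (hol e)"
    and trans: "transitive_hol e G"
    and card: "card G = 2 ^ (e + 1)"
    and phiG: "phi e (1 + 2 ^ (e - 1)) \<in> G"
  shows "card (centraliser (hol e) G (phi e (1 + 2 ^ (e - 1)))) = 2 ^ e \<and>
         (\<forall>u::int. odd u \<and> hol_elt e u (-1) \<in> G \<longrightarrow>
           card (centraliser (hol e) G (hol_elt e u (-1))) \<le> 2 ^ e \<and>
           (card (centraliser (hol e) G (hol_elt e u (-1))) < 2 ^ e \<longleftrightarrow>
             (\<exists>v b. hol_elt e v b \<in> G \<and>
                \<not> [u * (b - 1) = - 2 * v] (mod 2 ^ (e - 1)))))"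
proof -
  have e1: "e \<ge> 1" using e2 by simp
  interpret grp: group "hol e" by (rule hol_group[OF e1])
  have grpM: "group (hol e)" by (rule hol_group[OF e1])
  have Gc: "G \<subseteq> carrier (hol e)" using sub subgroup.subset by blast
  have fin: "finite G" using card card.infinite by force
  have MP: "(2::int)^e = 2 * 2^(e-1)" by (rule pow_split[OF e1])
  have P2: "(2::int)^(e-1) \<ge> 2"
  proof -
    have "(2::int)^1 \<le> 2^(e-1)" by (rule power_increasing) (use e2 in auto)
    then show ?thesis by simp
  qed
  define P :: int where "P = 2^(e-1)"
  define psi where "psi = phi e (1 + 2 ^ (e - 1))"
  have psi_eq: "psi = (0, 1 + P)"
    unfolding psi_def phi_def P_def using MP P2 by simp
  have psiG: "psi \<in> G" using phiG psi_def by simp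
  have carr: "0 \<le> fst p \<and> fst p < 2^e \<and> 0 \<le> snd p \<and> snd p < 2^e \<and> odd (snd p)"
    if "p \<in> G" for p
  proof -
    have "p \<in> carrier (hol e)" using that Gc by blast
    then show ?thesis by (simp add: hol_def)
  qed
  have mult: "\<And>p q. p \<otimes>\<^bsub>hol e\<^esub> q = ((fst p + fst q * snd p) mod 2^e, (snd p * snd q) mod 2^e)"
    by (simp add: hol_def)

  define E where "E = {g\<in>G. [fst g = 0] (mod 2^1)}"
  have hom1': "[fst (p \<otimes>\<^bsub>hol e\<^esub> q) = snd p * fst q + fst p] (mod 2^e)" for p q
    by (simp add: mult cong_def algebra_simps)
  have hom1: "\<And>p q. p \<in> carrier (hol e) \<Longrightarrow> q \<in> carrier (hol e) \<Longrightarrow>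
      [fst (p \<otimes>\<^bsub>hol e\<^esub> q) = snd p * fst q + fst p] (mod 2^e)" by (rule hom1')
  note K1 = kernel_sub[of e 1 G fst, OF e1 e1 sub hom1', folded E_def]
  have Esub: "subgroup E (hol e)" using K1(1) by simp
  have cent1: "centraliser (hol e) G psi = E"
  proof -
    have "g \<otimes>\<^bsub>hol e\<^esub> psi = psi \<otimes>\<^bsub>hol e\<^esub> g \<longleftrightarrow> [fst g = 0] (mod 2^1)" if g: "g \<in> G" for g
    proof -
      have gc: "0 \<le> fst g" "fst g < 2^e" using carr[OF g] by auto
      have "g \<otimes>\<^bsub>hol e\<^esub> psi = psi \<otimes>\<^bsub>hol e\<^esub> g \<longleftrightarrow> fst g = (fst g * (1 + 2^(e-1))) mod 2^e"
        using gc by (simp add: mult psi_eq P_def mult.commute)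
      also have "\<dots> \<longleftrightarrow> even (fst g)" by (rule key1[OF e1 gc])
      finally show ?thesis by (simp add: cong_0_iff)
    qed
    then show ?thesis unfolding centraliser_def E_def by auto
  qed
  obtain g1 where g1: "g1 \<in> G" "hol_act e g1 0 = 1"
  proof -
    have "(1::int) < 2^e" using e1 by simp
    then have "(0::int) \<in> {0..<2^e}" "(1::int) \<in> {0..<2^e}" by auto
    then show ?thesis using trans that unfolding transitive_hol_def by blast
  qed
  have fg1: "fst g1 = 1"
  proof -
    have "0 \<le> fst g1" "fst g1 < 2^e" using carr[OF g1(1)] by auto
    then show ?thesis using g1(2) by (simp add: hol_act_def)
  qed
  have g1E: "g1 \<notin> E" using fg1 by (simp add: E_def cong_0_iff)
  have cardE: "card G = 2 * card E"
  proof (rule count2[OF grpM Esub sub _ fin g1(1) g1E])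
    show "E \<subseteq> G" by (auto simp: E_def)
    fix g assume g: "g \<in> G" "g \<notin> E"
    then have "odd (fst g)" by (simp add: E_def cong_0_iff)
    then have "[fst g1 = fst g] (mod 2^1)" using fg1 by (simp add: cong_def odd_iff_mod_2_eq_one)
    then show "inv\<^bsub>hol e\<^esub> g1 \<otimes>\<^bsub>hol e\<^esub> g \<in> E" using K1(2)[OF g1(1) g(1)] by (simp add: E_def)
  qed
  have part1: "card (centraliser (hol e) G psi) = 2 ^ e"
    using cardE card cent1 by simp

  have part2: "card (centraliser (hol e) G (hol_elt e u (-1))) \<le> 2 ^ e \<and>
           (card (centraliser (hol e) G (hol_elt e u (-1))) < 2 ^ e \<longleftrightarrow>
             (\<exists>v b. hol_elt e v b \<in> G \<and>
                \<not> [u * (b - 1) = - 2 * v] (mod 2 ^ (e - 1))))"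
    if u: "odd u" and xG: "hol_elt e u (-1) \<in> G" for u :: int
  proof -
    define F where "F = (\<lambda>p::int\<times>int. u * (snd p - 1) + 2 * fst p)"
    have hom2': "[F (p \<otimes>\<^bsub>hol e\<^esub> q) = snd p * F q + F p] (mod 2^e)" for p q
    proof -
      have "[F (p \<otimes>\<^bsub>hol e\<^esub> q) = u * (snd p * snd q - 1) + 2 * (fst p + fst q * snd p)] (mod 2^e)"
        unfolding F_def mult by (simp only: fst_conv snd_conv modF)
      also have "u * (snd p * snd q - 1) + 2 * (fst p + fst q * snd p) = snd p * F q + F p"
        by (simp add: F_def algebra_simps)
      finally show ?thesis .
    qed
    have hom2: "\<And>p q. p \<in> carrier (hol e) \<Longrightarrow> q \<in> carrier (hol e) \<Longrightarrow>
      [F (p \<otimes>\<^bsub>hol e\<^esub> q) = snd p * F q + F p] (mod 2^e)" by (rule hom2')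
    define C where "C = {g\<in>G. [F g = 0] (mod 2^e)}"
    define C' where "C' = {g\<in>G. [F g = 0] (mod 2^(e-1))}"
    note K = kernel_sub[of e e G F, OF e1 order_refl sub hom2', folded C_def]
    note K' = kernel_sub[of e "e-1" G F, OF e1 diff_le_self sub hom2', folded C'_def]
    have Csub: "subgroup C (hol e)" using K(1) by simp
    have C'sub: "subgroup C' (hol e)" using K'(1) by simp
    have cent2: "centraliser (hol e) G (hol_elt e u (-1)) = C"
      unfolding centraliser_def C_def F_def using key2[OF e1] Gc by blast
    have CC': "C \<subseteq> C'" unfolding C_def C'_def
      using cong_dvd_modulus le_imp_power_dvd[of "e-1" e "2::int"] by auto
    have C'G: "C' \<subseteq> G" unfolding C'_def by auto
    have CG: "C \<subseteq> G" unfolding C_def by auto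
    have Fpsi: "F psi = u * P" by (simp add: F_def psi_eq)
    have psiC: "psi \<notin> C" using Fpsi u MP by (simp add: C_def cong_0_iff P_def)
    have psiC': "psi \<in> C'" using Fpsi psiG by (simp add: C'_def cong_0_iff P_def)
    have b1: "2 * card C \<le> card G"
      by (rule bound2[OF grpM Csub sub CG fin psiG psiC])
    have c2: "card C' = 2 * card C"
    proof (rule count2[OF grpM Csub C'sub CC' _ psiC' psiC])
      show "finite C'" using fin C'G finite_subset by blast
      fix g assume g: "g \<in> C'" "g \<notin> C"
      then have gG: "g \<in> G" by (simp add: C'_def)
      from g obtain t where t: "F g = P * t" by (auto simp: C'_def cong_0_iff P_def)
      have "odd t"
      proof
        assume "even t"
        then obtain s where "t = 2 * s" by auto
        then have "2^e dvd F g" using t MP P_def by simp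
        then show False using g gG by (simp add: C_def cong_0_iff)
      qed
      then have "even (u - t)" using u by simp
      then obtain s where s: "u - t = 2 * s" by (rule evenE)
      have "F psi - F g = 2^e * s" using Fpsi t s MP P_def by (simp add: algebra_simps)
      then have "[F psi = F g] (mod 2^e)" by (simp add: cong_iff_dvd_diff)
      then show "inv\<^bsub>hol e\<^esub> psi \<otimes>\<^bsub>hol e\<^esub> g \<in> C"
        using K(2)[OF psiG gG] by (simp add: C_def)
    qed
    have W: "(\<exists>v b. hol_elt e v b \<in> G \<and> \<not> [u * (b - 1) = - 2 * v] (mod 2 ^ (e - 1)))
             \<longleftrightarrow> (\<exists>g\<in>G. g \<notin> C')"
    proof
      assume "\<exists>v b. hol_elt e v b \<in> G \<and> \<not> [u * (b - 1) = - 2 * v] (mod 2 ^ (e - 1))"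
      then obtain v b where vb: "hol_elt e v b \<in> G" "\<not> [u * (b - 1) = - 2 * v] (mod 2 ^ (e - 1))"
        by blast
      have "[F (hol_elt e v b) = u * (b - 1) + 2 * v] (mod 2^e)"
        unfolding F_def hol_elt_def by (simp only: fst_conv snd_conv modF)
      then have "[F (hol_elt e v b) = u * (b - 1) + 2 * v] (mod 2^(e-1))"
        using cong_dvd_modulus le_imp_power_dvd[of "e-1" e "2::int"] by auto
      moreover have "\<not> [u * (b - 1) + 2 * v = 0] (mod 2^(e-1))"
        using vb(2) by (simp add: cong_iff_dvd_diff)
      ultimately have "\<not> [F (hol_elt e v b) = 0] (mod 2^(e-1))"
        by (meson cong_sym cong_trans)
      then show "\<exists>g\<in>G. g \<notin> C'" using vb(1) by (auto simp: C'_def)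
    next
      assume "\<exists>g\<in>G. g \<notin> C'"
      then obtain g where g: "g \<in> G" "g \<notin> C'" by blast
      have "hol_elt e (fst g) (snd g) = g" using carr[OF g(1)] by (simp add: hol_elt_def)
      moreover have "\<not> [u * (snd g - 1) = - 2 * fst g] (mod 2 ^ (e - 1))"
        using g by (simp add: C'_def F_def cong_iff_dvd_diff)
      ultimately show "\<exists>v b. hol_elt e v b \<in> G \<and> \<not> [u * (b - 1) = - 2 * v] (mod 2 ^ (e - 1))"
        using g by metis
    qed
    have le: "card C \<le> 2^e" using b1 card by simp
    have "card C < 2^e \<longleftrightarrow> (\<exists>g\<in>G. g \<notin> C')"
    proof
      assume "card C < 2^e"
      show "\<exists>g\<in>G. g \<notin> C'"
      proof (rule ccontr)
        assume "\<not> (\<exists>g\<in>G. g \<notin> C')"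
        then have "C' = G" using C'G by blast
        then show False using c2 card \<open>card C < 2^e\<close> by simp
      qed
    next
      assume "\<exists>g\<in>G. g \<notin> C'"
      then obtain g where "g \<in> G" "g \<notin> C'" by blast
      then have "2 * card C' \<le> card G" by (rule bound2[OF grpM C'sub sub C'G fin])
      then have "2 * card C \<le> 2^e" using c2 card by simp
      moreover have "(0::nat) < 2^e" by simp
      ultimately show "card C < 2^e" by linarith
    qed
    then show ?thesis using le W cent2 by simp
  qed
  show ?thesis using part1 part2 psi_def by blast
qed

end
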